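(* Let $\Omega$ be a region of $\mathbb{C}$ and let $F:\Omega\to\mathbb{M}_n$ be analytic. Suppose that for each $k=1,\ldots,n$ the function $z\mapsto s_k(F(z))$ attains its maximum value on $\Omega$ (at some point $z_k\in\Omega$, possibly different for different $k$). Then $F$ is constant on $\Omega$.
   Context: A region is a nonempty open connected subset of $\mathbb{C}$. $\mathbb{M}_n$ is the set of $n\times n$ complex matrices; $F$ is analytic if each entry is analytic. For $A\in\mathbb{M}_n$, the singular values $s_1(A)\geq s_2(A)\geq\cdots\geq s_n(A)\geq 0$ are the nonnegative square roots of the eigenvalues of $A^*A$, listed in nonincreasing order. *)

theory Defs
  imports "HOL-Analysis.Analysis" "HOL-Computational_Algebra.Fundamental_Theorem_Algebra"
begin

definition adjoint_mat :: "complex^'n^'n \<Rightarrow> complex^'n^'n" where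
  "adjoint_mat A = (\<chi> i j. cnj (A $ j $ i))"

definition charpoly :: "complex^'n^'n \<Rightarrow> complex poly" where
  "charpoly A = det (\<chi> i j. (if i = j then [:0, 1:] else 0) - [:A $ i $ j:])"

text \<open>Eigenvalues of A^* A counted with algebraic multiplicity (they are real and
  nonnegative), listed in nonincreasing order.\<close>
definition sv_eigs :: "complex^'n^'n \<Rightarrow> real list" where
  "sv_eigs A = rev (sorted_list_of_multiset
       (image_mset Re (proots (charpoly (adjoint_mat A ** A)))))"

definition sing_val :: "nat \<Rightarrow> complex^'n^'n \<Rightarrow> real" where
  "sing_val k A = sqrt (sv_eigs A ! (k - 1))"

end

theory Submission
  imports Defs "HOL-Complex_Analysis.Complex_Analysis"
begin


definition cinner :: "complex^'n \<Rightarrow> complex^'n \<Rightarrow> complex" where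
  "cinner x y = (\<Sum>i\<in>UNIV. x$i * cnj (y$i))"

lemma cinner_add_left: "cinner (x + y) z = cinner x z + cinner y z"
  by (simp add: cinner_def distrib_right sum.distrib)
lemma cinner_add_right: "cinner x (y + z) = cinner x y + cinner x z"
  by (simp add: cinner_def distrib_left sum.distrib)
lemma cinner_diff_left: "cinner (x - y) z = cinner x z - cinner y z"
  by (simp add: cinner_def left_diff_distrib sum_subtractf)
lemma cinner_diff_right: "cinner x (y - z) = cinner x y - cinner x z"
  by (simp add: cinner_def right_diff_distrib sum_subtractf)
lemma cinner_scale_left: "cinner (c *s x) z = c * cinner x z"
  by (simp add: cinner_def sum_distrib_left mult.assoc)
lemma cinner_scale_right: "cinner x (c *s z) = cnj c * cinner x z"
  by (simp add: cinner_def sum_distrib_left algebra_simps)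
lemma cinner_zero_left[simp]: "cinner 0 z = 0" by (simp add: cinner_def)
lemma cinner_zero_right[simp]: "cinner z 0 = 0" by (simp add: cinner_def)
lemma cinner_sym: "cinner y x = cnj (cinner x y)"
  by (simp add: cinner_def mult.commute)
lemma cinner_sum_left: "finite A \<Longrightarrow> cinner (\<Sum>a\<in>A. f a) z = (\<Sum>a\<in>A. cinner (f a) z)"
  by (induction A rule: finite_induct) (auto simp: cinner_add_left)
lemma cinner_sum_right: "finite A \<Longrightarrow> cinner z (\<Sum>a\<in>A. f a) = (\<Sum>a\<in>A. cinner z (f a))"
  by (induction A rule: finite_induct) (auto simp: cinner_add_right)

lemma Re_cinner: "Re (cinner x y) = inner x y"
  by (simp add: cinner_def inner_vec_def inner_complex_def Re_sum)

lemma norm_sq_vec: "(norm (x::complex^'n))^2 = (\<Sum>i\<in>UNIV. (cmod (x$i))^2)"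
  by (simp add: norm_vec_def L2_set_def sum_nonneg)

lemma cinner_self: "cinner x x = of_real ((norm x)^2)"
proof -
  have "cinner x x = (\<Sum>i\<in>UNIV. of_real ((cmod (x$i))^2))"
    unfolding cinner_def by (intro sum.cong refl) (simp add: complex_norm_square[symmetric])
  also have "\<dots> = of_real ((norm x)^2)" by (simp add: norm_sq_vec)
  finally show ?thesis .
qed

lemma Re_cinner_self: "Re (cinner x x) = (norm x)^2"
  by (simp add: cinner_self)

lemma norm_scale_vec: "norm (c *s (x::complex^'n)) = cmod c * norm x"
proof -
  have "(norm (c *s x))^2 = (cmod c * norm x)^2"
    by (simp add: norm_sq_vec power_mult_distrib norm_mult sum_distrib_left)
  then show ?thesis by (simp add: power2_eq_iff_nonneg)
qed

lemma cinner_cs: "cmod (cinner x y) \<le> norm x * norm y"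
proof (cases "cinner x y = 0")
  case True then show ?thesis by simp
next
  case False
  define w where "w = cinner x y"
  define c where "c = w / of_real (cmod w)"
  have cn: "cmod c = 1" using False by (simp add: c_def w_def norm_divide)
  have "cinner x (c *s y) = cnj c * w" by (simp add: cinner_scale_right w_def)
  also have "\<dots> = of_real (cmod w)" using False
    by (simp add: c_def w_def field_simps) (simp add: complex_norm_square[symmetric] power2_eq_square[symmetric])
  finally have "cmod w = inner x (c *s y)" by (metis Re_cinner Re_complex_of_real)
  also have "\<dots> \<le> norm x * norm (c *s y)" by (rule norm_cauchy_schwarz)
  also have "\<dots> = norm x * norm y" by (simp add: norm_scale_vec cn)
  finally show ?thesis by (simp add: w_def)
qed

lemma cinner_eq_zero_iff: "cinner x x = 0 \<longleftrightarrow> x = 0"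
  by (simp add: cinner_self)

lemma norm_diff_sq: "(norm (a - b))^2 = (norm a)^2 - 2 * Re (cinner a b) + (norm b)^2"
proof -
  have "(norm (a - b))^2 = Re (cinner (a - b) (a - b))" by (simp add: Re_cinner_self)
  also have "\<dots> = Re (cinner a a) - Re (cinner a b) - Re (cinner b a) + Re (cinner b b)"
    by (simp add: cinner_diff_left cinner_diff_right)
  also have "Re (cinner b a) = Re (cinner a b)" by (subst cinner_sym) simp
  finally show ?thesis by (simp add: Re_cinner_self)
qed

lemma adj_mv: "cinner (M *v x) y = cinner x (adjoint_mat M *v y)"
proof -
  have "cinner (M *v x) y = (\<Sum>i\<in>UNIV. \<Sum>j\<in>UNIV. M$i$j * x$j * cnj (y$i))"
    by (simp add: cinner_def matrix_vector_mult_def sum_distrib_right)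
  also have "\<dots> = (\<Sum>j\<in>UNIV. \<Sum>i\<in>UNIV. M$i$j * x$j * cnj (y$i))" by (rule sum.swap)
  also have "\<dots> = cinner x (adjoint_mat M *v y)"
    by (simp add: cinner_def matrix_vector_mult_def adjoint_mat_def sum_distrib_left mult_ac)
  finally show ?thesis .
qed

lemma adjoint_adjoint[simp]: "adjoint_mat (adjoint_mat A) = A"
  by (simp add: adjoint_mat_def vec_eq_iff)

lemma adjoint_mul: "adjoint_mat (A ** B) = adjoint_mat B ** adjoint_mat A"
  by (simp add: adjoint_mat_def vec_eq_iff matrix_matrix_mult_def mult.commute)

lemma adj_mv2: "cinner x (M *v y) = cinner (adjoint_mat M *v x) y"
  by (metis adj_mv adjoint_adjoint)

lemma herm_AA: "adjoint_mat (adjoint_mat A ** A) = adjoint_mat A ** A"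
  by (simp add: adjoint_mul)

lemma AA_quad: "cinner ((adjoint_mat A ** A) *v x) y = cinner (A *v x) (A *v y)"
  by (simp add: matrix_vector_mul_assoc[symmetric] adj_mv2)



definition orthonormal :: "(complex^'n) list \<Rightarrow> bool" where
  "orthonormal V \<longleftrightarrow> (\<forall>i<length V. \<forall>j<length V. cinner (V!i) (V!j) = (if i = j then 1 else 0))"

definition eigl :: "complex^'n^'n \<Rightarrow> (complex^'n) list \<Rightarrow> real list \<Rightarrow> bool" where
  "eigl H V ds \<longleftrightarrow> length ds = length V \<and>
     (\<forall>i<length V. H *v (V!i) = of_real (ds!i) *s (V!i))"

lemma exists_orth:
  fixes V :: "(complex^'n) list"
  assumes on: "orthonormal V" and len: "length V < CARD('n)"
  shows "\<exists>x. norm x = 1 \<and> (\<forall>v\<in>set V. cinner x v = 0)"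
proof -
  have "vec.span (set V) \<noteq> UNIV"
  proof
    assume "vec.span (set V) = UNIV"
    then have "vec.dim (UNIV::(complex^'n) set) \<le> card (set V)"
      by (intro vec.dim_le_card) auto
    also have "\<dots> \<le> length V" by (rule card_length)
    finally show False using len vec_dim_card by (metis not_le)
  qed
  then obtain y where y: "y \<notin> vec.span (set V)" by blast
  define x where "x = y - (\<Sum>i<length V. cinner y (V!i) *s V!i)"
  have orth: "cinner x (V!j) = 0" if j: "j < length V" for j
  proof -
    have "cinner x (V!j) = cinner y (V!j) - (\<Sum>i<length V. cinner y (V!i) * cinner (V!i) (V!j))"
      by (simp add: x_def cinner_diff_left cinner_sum_left cinner_scale_left)
    also have "(\<Sum>i<length V. cinner y (V!i) * cinner (V!i) (V!j)) =
       (\<Sum>i<length V. if i = j then cinner y (V!j) else 0)"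
      using on j unfolding orthonormal_def by (intro sum.cong) auto
    also have "\<dots> = cinner y (V!j)" using j by simp
    finally show ?thesis by simp
  qed
  have "x \<noteq> 0"
  proof
    assume "x = 0"
    then have "y = (\<Sum>i<length V. cinner y (V!i) *s V!i)" by (simp add: x_def)
    moreover have "(\<Sum>i<length V. cinner y (V!i) *s V!i) \<in> vec.span (set V)"
      by (intro vec.span_sum vec.span_scale vec.span_base) auto
    ultimately show False using y by simp
  qed
  then have nx: "norm x > 0" by simp
  define x' where "x' = complex_of_real (1 / norm x) *s x"
  have "norm x' = 1" using nx by (simp add: x'_def norm_scale_vec norm_divide)
  moreover have "\<forall>v\<in>set V. cinner x' v = 0"
    using orth by (auto simp: x'_def cinner_scale_left in_set_conv_nth)
  ultimately show ?thesis by blast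
qed

lemma Hmv_scale: "(H::complex^'n^'n) *v (c *s x) = c *s (H *v x)"
  by (rule vector_scalar_commute)

lemma herm_sym: "adjoint_mat H = H \<Longrightarrow> cinner (H *v x) y = cinner x (H *v y)"
  by (metis adj_mv)

lemma herm_real: "adjoint_mat H = H \<Longrightarrow> cinner (H *v x) x = of_real (Re (cinner (H *v x) x))"
  by (metis herm_sym cinner_sym complex_eq_iff complex_cnj_cnj cnj.simps(2) Re_complex_of_real Im_complex_of_real
      add_cancel_right_left add_diff_cancel_left' diff_0 diff_self equation_minus_iff neg_equal_zero)

lemma quad_expand:
  assumes h: "adjoint_mat H = H"
  shows "Re (cinner (H *v (x + of_real t *s r)) (x + of_real t *s r)) =
    Re (cinner (H *v x) x) + 2 * t * Re (cinner (H *v x) r) + t^2 * Re (cinner (H *v r) r)"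
proof -
  have e: "Re (cinner (H *v r) x) = Re (cinner (H *v x) r)"
    by (metis herm_sym[OF h] cinner_sym complex_cnj_cnj cnj.simps(1) Re_complex_of_real) 
  show ?thesis
    by (simp add: matrix_vector_right_distrib Hmv_scale cinner_add_left cinner_add_right
        cinner_scale_left cinner_scale_right e power2_eq_square algebra_simps)
qed


lemma eig_orth:
  assumes h: "adjoint_mat H = H" and e: "eigl H V ds"
    and x: "\<forall>v\<in>set V. cinner x v = 0"
  shows "\<forall>v\<in>set V. cinner (H *v x) v = 0"
proof
  fix v assume "v \<in> set V"
  then obtain i where i: "i < length V" "v = V!i" by (auto simp: in_set_conv_nth)
  have "cinner (H *v x) v = cinner x (H *v v)" by (rule herm_sym[OF h])
  also have "\<dots> = cinner x (of_real (ds!i) *s v)" using e i unfolding eigl_def by simp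
  also have "\<dots> = 0" using x i by (simp add: cinner_scale_right)
  finally show "cinner (H *v x) v = 0" .
qed

lemma ext_eig:
  fixes H :: "complex^'n^'n"
  assumes h: "adjoint_mat H = H" and on: "orthonormal V" and e: "eigl H V ds"
    and len: "length V < CARD('n)"
  shows "\<exists>x \<nu>. norm x = 1 \<and> (\<forall>v\<in>set V. cinner x v = 0) \<and> H *v x = of_real \<nu> *s x \<and>
     (\<forall>y. (\<forall>v\<in>set V. cinner y v = 0) \<longrightarrow> Re (cinner (H *v y) y) \<le> \<nu> * (norm y)^2)"
proof -
  define S where "S = {x::complex^'n. norm x = 1 \<and> (\<forall>v\<in>set V. cinner x v = 0)}"
  define q where "q = (\<lambda>x. Re (cinner (H *v x) x))"
  have cl: "closed {x::complex^'n. cinner x v = 0}" for v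
    unfolding cinner_def by (intro closed_Collect_eq continuous_intros)
  have "closed S"
  proof -
    have "S = sphere 0 1 \<inter> (\<Inter>v\<in>set V. {x. cinner x v = 0})"
      by (auto simp: S_def)
    then show ?thesis using cl by (auto intro!: closed_Int closed_INT)
  qed
  moreover have "bounded S" unfolding S_def bounded_iff by auto
  ultimately have "compact S" by (simp add: compact_eq_bounded_closed)
  moreover have "S \<noteq> {}" using exists_orth[OF on len] by (auto simp: S_def)
  moreover have "continuous_on S q"
    unfolding q_def cinner_def matrix_vector_mult_def by (intro continuous_intros)
  ultimately obtain x where xS: "x \<in> S" and xmax: "\<forall>y\<in>S. q y \<le> q x"
    using continuous_attains_sup by blast
  define \<nu> where "\<nu> = q x"
  have nx: "norm x = 1" and xo: "\<forall>v\<in>set V. cinner x v = 0" using xS by (auto simp: S_def)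
  have bound: "q y \<le> \<nu> * (norm y)^2" if yo: "\<forall>v\<in>set V. cinner y v = 0" for y
  proof (cases "y = 0")
    case True then show ?thesis by (simp add: q_def)
  next
    case False
    then have ny: "norm y > 0" by simp
    define y' where "y' = complex_of_real (1 / norm y) *s y"
    have "y' \<in> S" using ny yo
      by (auto simp: S_def y'_def norm_scale_vec norm_divide cinner_scale_left)
    then have "q y' \<le> \<nu>" using xmax by (simp add: \<nu>_def)
    moreover have "q y' = q y / (norm y)^2"
      by (simp add: q_def y'_def Hmv_scale cinner_scale_left cinner_scale_right power2_eq_square)
    ultimately show ?thesis using ny by (simp add: field_simps)
  qed
  have Hxx: "cinner (H *v x) x = of_real \<nu>"
    using herm_real[OF h, of x] by (simp add: \<nu>_def q_def)
  define r where "r = H *v x - of_real \<nu> *s x"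
  have ro: "\<forall>v\<in>set V. cinner r v = 0"
    using eig_orth[OF h e xo] xo by (simp add: r_def cinner_diff_left cinner_scale_left)
  have rx: "cinner r x = 0"
    using nx by (simp add: r_def cinner_diff_left cinner_scale_left Hxx cinner_self)
  have xr: "cinner x r = 0" using rx by (subst cinner_sym) simp
  have Hxr: "Re (cinner (H *v x) r) = (norm r)^2"
  proof -
    have "H *v x = r + of_real \<nu> *s x" by (simp add: r_def)
    then have "cinner (H *v x) r = cinner r r + of_real \<nu> * cinner x r"
      by (simp add: cinner_add_left cinner_scale_left)
    then show ?thesis by (simp add: xr Re_cinner_self)
  qed
  have ineq: "2 * t * (norm r)^2 + t^2 * q r \<le> \<nu> * t^2 * (norm r)^2" for t
  proof -
    have yo: "\<forall>v\<in>set V. cinner (x + of_real t *s r) v = 0"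
      using xo ro by (simp add: cinner_add_left cinner_scale_left)
    have "q (x + of_real t *s r) = \<nu> + 2 * t * (norm r)^2 + t^2 * q r"
      unfolding q_def quad_expand[OF h] using Hxr by (simp add: Hxx)
    moreover have "(norm (x + of_real t *s r))^2 = 1 + t^2 * (norm r)^2"
    proof -
      have "(norm (x + of_real t *s r))^2 = Re (cinner (x + of_real t *s r) (x + of_real t *s r))"
        by (simp add: Re_cinner_self)
      also have "\<dots> = 1 + t^2 * (norm r)^2"
        using nx xr rx by (simp add: cinner_add_left cinner_add_right cinner_scale_left cinner_scale_right
            Re_cinner_self power2_eq_square)
      finally show ?thesis .
    qed
    ultimately show ?thesis using bound[OF yo] by (simp add: algebra_simps)
  qed
  have "r = 0"
  proof (rule ccontr)
    assume "r \<noteq> 0"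
    then have rp: "(norm r)^2 > 0" by simp
    define K where "K = \<bar>\<nu>\<bar> * (norm r)^2 + \<bar>q r\<bar> + 1"
    have Kp: "K > 0" unfolding K_def by (simp add: add_nonneg_pos)
    define t where "t = (norm r)^2 / K"
    have tp: "t > 0" using rp Kp by (simp add: t_def)
    have "t * (2 * (norm r)^2 + t * q r) \<le> t * (\<nu> * t * (norm r)^2)"
      using ineq[of t] by (simp add: power2_eq_square algebra_simps)
    then have "2 * (norm r)^2 + t * q r \<le> \<nu> * t * (norm r)^2"
      using tp by (rule mult_left_le_imp_le)
    then have "2 * (norm r)^2 \<le> t * (\<nu> * (norm r)^2 - q r)"
      by (simp add: algebra_simps)
    also have "\<dots> \<le> t * (K - 1)" using tp
    proof (intro mult_left_mono)
      have "\<nu> * (norm r)^2 \<le> \<bar>\<nu>\<bar> * (norm r)^2" by (intro mult_right_mono) auto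
      then show "\<nu> * (norm r)^2 - q r \<le> K - 1" unfolding K_def by linarith
    qed simp
    also have "\<dots> < t * K" using tp by simp
    also have "\<dots> = (norm r)^2" using Kp by (simp add: t_def)
    finally show False using rp by simp
  qed
  then have "H *v x = of_real \<nu> *s x" by (simp add: r_def)
  then show ?thesis using nx xo bound unfolding q_def by blast
qed



lemma orthonormal_snoc:
  assumes "orthonormal V" "norm x = 1" "\<forall>v\<in>set V. cinner x v = 0"
  shows "orthonormal (V @ [x])"
proof -
  have a: "cinner x (V!i) = 0" "cinner (V!i) x = 0" if "i < length V" for i
    using assms(3) that by (auto, subst cinner_sym, auto)
  have b: "cinner x x = 1" using assms(2) by (simp add: cinner_self)
  show ?thesis using assms(1) a b unfolding orthonormal_def
    by (auto simp: nth_append less_Suc_eq)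
qed

lemma eigl_snoc:
  assumes "eigl H V ds" "H *v x = of_real \<nu> *s x"
  shows "eigl H (V @ [x]) (ds @ [\<nu>])"
  using assms unfolding eigl_def by (auto simp: nth_append less_Suc_eq)

lemma full_ext:
  fixes H :: "complex^'n^'n"
  assumes h: "adjoint_mat H = H"
  shows "orthonormal V \<Longrightarrow> eigl H V ds \<Longrightarrow> length V \<le> CARD('n) \<Longrightarrow>
    \<exists>C es. orthonormal (V @ C) \<and> eigl H (V @ C) (ds @ es) \<and> length (V @ C) = CARD('n)"
proof (induction "CARD('n) - length V" arbitrary: V ds)
  case 0
  then show ?case by (intro exI[of _ "[]"]) auto
next
  case (Suc m)
  then have len: "length V < CARD('n)" by simp
  obtain x \<nu> where x: "norm x = 1" "\<forall>v\<in>set V. cinner x v = 0" "H *v x = of_real \<nu> *s x"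
    using ext_eig[OF h Suc.prems(1,2) len] by blast
  have "\<exists>C es. orthonormal ((V @ [x]) @ C) \<and> eigl H ((V @ [x]) @ C) ((ds @ [\<nu>]) @ es) \<and>
      length ((V @ [x]) @ C) = CARD('n)"
    using Suc.hyps(2) len orthonormal_snoc[OF Suc.prems(1) x(1,2)] eigl_snoc[OF Suc.prems(2) x(3)]
    by (intro Suc.hyps(1)) auto
  then show ?case by (metis append_assoc append_Cons append_Nil)
qed

definition lift :: "complex^'n^'n \<Rightarrow> complex poly^'n^'n" where
  "lift M = (\<chi> i j. [:M$i$j:])"

lemma lift_mul: "lift (A ** B) = lift A ** lift B"
  by (simp add: lift_def matrix_matrix_mult_def vec_eq_iff sum_to_poly mult_ac)

lemma lift_one: "lift (mat 1) = mat 1"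
  by (simp add: lift_def mat_def vec_eq_iff)

lemma mat_sub_rdistrib: "((A::'a::comm_ring_1^'n^'n) - B) ** C = A ** C - B ** C"
  by (simp add: matrix_matrix_mult_def vec_eq_iff sum_subtractf algebra_simps)

lemma mat_sub_ldistrib: "(C::'a::comm_ring_1^'n^'n) ** (A - B) = C ** A - C ** B"
  by (simp add: matrix_matrix_mult_def vec_eq_iff sum_subtractf algebra_simps)

lemma charpoly_eig:
  fixes H :: "complex^'n^'n"
  assumes on: "orthonormal B" and e: "eigl H B ds" and len: "length B = CARD('n)"
  shows "charpoly H = (\<Prod>k<CARD('n). [:- of_real (ds!k), 1:])"
proof -
  obtain idx :: "'n \<Rightarrow> nat" where bij: "bij_betw idx UNIV {0..<CARD('n)}"
    using ex_bij_betw_finite_nat[of "UNIV::'n set"] by auto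
  have idx_lt: "idx j < CARD('n)" for j using bij by (auto simp: bij_betw_def)
  have idx_inj: "idx j = idx j' \<longleftrightarrow> j = j'" for j j' using bij by (auto simp: bij_betw_def inj_on_def)
  define U :: "complex^'n^'n" where "U = (\<chi> i j. (B ! idx j) $ i)"
  define D :: "complex^'n^'n" where "D = (\<chi> i j. if i = j then of_real (ds ! idx j) else 0)"
  have UU: "adjoint_mat U ** U = mat 1"
  proof -
    have "(adjoint_mat U ** U) $ j $ j' = cinner (B ! idx j') (B ! idx j)" for j j'
      by (simp add: adjoint_mat_def U_def matrix_matrix_mult_def cinner_def mult.commute)
    also have "cinner (B ! idx j') (B ! idx j) = (if j = j' then 1 else 0)" for j j'
      using on len idx_lt idx_inj unfolding orthonormal_def by auto
    finally show ?thesis by (simp add: vec_eq_iff mat_def)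
  qed
  then have UU': "U ** adjoint_mat U = mat 1" by (simp add: matrix_left_right_inverse)
  have HU: "H ** U = U ** D"
  proof -
    have "(H ** U) $ i $ j = (H *v (B ! idx j)) $ i" for i j
      by (simp add: U_def matrix_matrix_mult_def matrix_vector_mult_def)
    also have "(H *v (B ! idx j)) $ i = of_real (ds ! idx j) * (B ! idx j) $ i" for i j
      using e len idx_lt unfolding eigl_def by simp
    also have "of_real (ds ! idx j) * (B ! idx j) $ i = (U ** D) $ i $ j" for i j
    proof -
      have "(U ** D) $ i $ j = (\<Sum>k\<in>UNIV. if k = j then (B ! idx k) $ i * of_real (ds ! idx j) else 0)"
        by (simp add: U_def D_def matrix_matrix_mult_def if_distrib cong: if_cong)
      also have "\<dots> = of_real (ds ! idx j) * (B ! idx j) $ i" by (simp add: mult.commute)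
      finally show ?thesis by simp
    qed
    finally show ?thesis by (simp add: vec_eq_iff)
  qed
  have Hd: "H = U ** D ** adjoint_mat U"
    by (metis HU UU' matrix_mul_assoc matrix_mul_rid)
  define XI :: "complex poly^'n^'n" where "XI = (\<chi> i j. if i = j then [:0,1:] else 0)"
  have XIc: "lift U ** XI = XI ** lift U"
  proof -
    have a: "(lift U ** XI) $ i $ j = [:U$i$j:] * [:0,1:]" for i j
    proof -
      have "(lift U ** XI) $ i $ j = (\<Sum>k\<in>UNIV. if k = j then [:U$i$k:] * [:0,1:] else 0)"
        unfolding XI_def lift_def matrix_matrix_mult_def vec_lambda_beta by (intro sum.cong refl) simp
      then show ?thesis by simp
    qed
    have b: "(XI ** lift U) $ i $ j = [:0,1:] * [:U$i$j:]" for i j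
    proof -
      have "(XI ** lift U) $ i $ j = (\<Sum>k\<in>UNIV. if k = i then [:0,1:] * [:U$k$j:] else 0)"
        unfolding XI_def lift_def matrix_matrix_mult_def vec_lambda_beta by (intro sum.cong refl) simp
      then show ?thesis by simp
    qed
    show ?thesis using a b by (simp add: vec_eq_iff mult.commute)
  qed
  have XIone: "XI ** mat 1 = XI" by simp
  have cp: "(\<chi> i j. (if i = j then [:0, 1:] else 0) - [:H $ i $ j:]) = XI - lift H"
    by (simp add: XI_def lift_def vec_eq_iff)
  have "XI - lift H = lift U ** (XI - lift D) ** lift (adjoint_mat U)"
  proof -
    have "lift U ** (XI - lift D) ** lift (adjoint_mat U) =
        lift U ** XI ** lift (adjoint_mat U) - lift U ** lift D ** lift (adjoint_mat U)"
      by (simp add: mat_sub_ldistrib mat_sub_rdistrib)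
    also have "lift U ** XI ** lift (adjoint_mat U) = XI"
      by (metis XIc matrix_mul_assoc lift_mul UU' lift_one XIone)
    also have "lift U ** lift D ** lift (adjoint_mat U) = lift H"
      by (simp add: Hd lift_mul)
    finally show ?thesis by simp
  qed
  then have "charpoly H = det (lift U) * det (XI - lift D) * det (lift (adjoint_mat U))"
    by (simp add: charpoly_def cp det_mul)
  also have "det (lift U) * det (XI - lift D) * det (lift (adjoint_mat U)) = det (XI - lift D)"
  proof -
    have "det (lift U) * det (lift (adjoint_mat U)) = 1"
      by (metis det_mul lift_mul UU' lift_one det_I)
    then show ?thesis by (metis mult.commute mult.left_commute mult_1_right)
  qed
  also have "det (XI - lift D) = (\<Prod>j\<in>UNIV. [:- of_real (ds ! idx j), 1:])"
    by (subst det_diagonal) (auto simp: XI_def lift_def D_def)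
  also have "\<dots> = (\<Prod>k\<in>{0..<CARD('n)}. [:- of_real (ds ! k), 1:])"
    by (rule prod.reindex_bij_betw[OF bij])
  finally show ?thesis by (simp add: atLeast0LessThan)
qed

lemma mset_nth_sum: "mset xs = (\<Sum>k<length xs. {#xs!k#})"
proof (induction xs rule: rev_induct)
  case Nil then show ?case by simp
next
  case (snoc x xs)
  then show ?case by (simp add: nth_append)
qed

lemma sv_eigs_eq:
  fixes A :: "complex^'n^'n"
  assumes "charpoly (adjoint_mat A ** A) = (\<Prod>k<CARD('n). [:- of_real (ds!k), 1:])"
    and "length ds = CARD('n)"
  shows "sv_eigs A = rev (sort ds)"
proof -
  have "proots (\<Prod>k<CARD('n). [:- complex_of_real (ds!k), 1:]) = (\<Sum>k<CARD('n). {#of_real (ds!k)#})"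
    by (subst proots_prod) auto
  also have "\<dots> = mset (map complex_of_real ds)"
  proof -
    have "mset (map complex_of_real ds) = (\<Sum>k<length (map complex_of_real ds). {#(map complex_of_real ds)!k#})"
      by (rule mset_nth_sum)
    then show ?thesis using assms(2) by simp
  qed
  finally have "image_mset Re (proots (charpoly (adjoint_mat A ** A))) = mset ds"
    using assms(1) by (simp add: multiset.map_comp o_def)
  then show ?thesis by (simp add: sv_eigs_def)
qed



lemma rev_sort_ge:
  fixes xs :: "real list"
  assumes j: "j < length xs"
  shows "t \<le> rev (sort xs) ! j \<longleftrightarrow> j < length (filter (\<lambda>x. t \<le> x) xs)"
proof -
  define L where "L = rev (sort xs)"
  have lenL: "length L = length xs" by (simp add: L_def)
  have mono: "L ! b \<le> L ! a" if "a \<le> b" "b < length xs" for a b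
  proof -
    have "sort xs ! (length xs - Suc b) \<le> sort xs ! (length xs - Suc a)"
      using that by (intro sorted_nth_mono) auto
    then show ?thesis using that by (simp add: L_def rev_nth)
  qed
  have "length (filter (\<lambda>x. t \<le> x) xs) = length (filter (\<lambda>x. t \<le> x) L)"
  proof -
    have "mset (filter (\<lambda>x. t \<le> x) xs) = mset (filter (\<lambda>x. t \<le> x) L)"
      by (simp add: L_def)
    then show ?thesis by (metis size_mset)
  qed
  also have "\<dots> = card {i. i < length L \<and> t \<le> L ! i}" by (rule length_filter_conv_card)
  finally have cnt: "length (filter (\<lambda>x. t \<le> x) xs) = card {i. i < length xs \<and> t \<le> L ! i}"
    by (simp add: lenL)
  show ?thesis
  proof
    assume "t \<le> rev (sort xs) ! j"
    then have "{..j} \<subseteq> {i. i < length xs \<and> t \<le> L ! i}"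
      using mono j by (force simp: L_def)
    then have "card {..j} \<le> card {i. i < length xs \<and> t \<le> L ! i}"
      by (intro card_mono) auto
    then show "j < length (filter (\<lambda>x. t \<le> x) xs)" using cnt by simp
  next
    assume a: "j < length (filter (\<lambda>x. t \<le> x) xs)"
    show "t \<le> rev (sort xs) ! j"
    proof (rule ccontr)
      assume "\<not> t \<le> rev (sort xs) ! j"
      then have "{i. i < length xs \<and> t \<le> L ! i} \<subseteq> {..<j}"
        using mono j by (force simp: L_def not_le)
      then have "card {i. i < length xs \<and> t \<le> L ! i} \<le> card {..<j}"
        by (intro card_mono) auto
      then show False using a cnt by simp
    qed
  qed
qed

lemma filter_len_ge:
  assumes "i \<le> length xs" "\<forall>i'<i. P (xs ! i')"
  shows "i \<le> length (filter P xs)"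
proof -
  have "{..<i} \<subseteq> {i'. i' < length xs \<and> P (xs ! i')}" using assms by auto
  then have "card {..<i} \<le> card {i'. i' < length xs \<and> P (xs ! i')}" by (intro card_mono) auto
  then show ?thesis by (simp add: length_filter_conv_card)
qed

lemma comb:
  fixes mus nus :: "real list"
  assumes ne: "nus \<noteq> []" and hyp: "\<forall>i<length mus. rev (sort (mus @ nus)) ! i \<le> mus ! i"
  shows "\<forall>\<nu>\<in>set nus. \<nu> \<le> rev (sort (mus @ nus)) ! length mus"
    and "rev (sort (mus @ nus)) ! length mus \<in> set nus"
proof -
  define L where "L = rev (sort (mus @ nus))"
  define k where "k = length mus"
  have kl: "k < length (mus @ nus)" using ne by (simp add: k_def)
  show a: "\<forall>\<nu>\<in>set nus. \<nu> \<le> rev (sort (mus @ nus)) ! length mus"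
  proof (intro ballI, rule ccontr)
    fix \<nu> assume nu: "\<nu> \<in> set nus" and "\<not> \<nu> \<le> rev (sort (mus @ nus)) ! length mus"
    then have lt: "L ! k < \<nu>" by (simp add: L_def k_def)
    have fn: "1 \<le> length (filter (\<lambda>x. \<nu> \<le> x) nus)"
    proof -
      have "filter (\<lambda>x. \<nu> \<le> x) nus \<noteq> []" using nu by (auto simp: filter_empty_conv)
      then show ?thesis by (cases "filter (\<lambda>x. \<nu> \<le> x) nus") auto
    qed
    show False
    proof (cases "\<exists>i<k. mus ! i < \<nu>")
      case False
      then have "\<forall>i'<k. \<nu> \<le> mus ! i'" by (meson not_less)
      then have "k \<le> length (filter (\<lambda>x. \<nu> \<le> x) mus)"
        by (intro filter_len_ge) (auto simp: k_def)
      then have "k < length (filter (\<lambda>x. \<nu> \<le> x) (mus @ nus))" using fn by simp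
      then have "\<nu> \<le> L ! k" using rev_sort_ge[OF kl] by (simp add: L_def)
      then show False using lt by simp
    next
      case True
      define i where "i = (LEAST i. i < k \<and> mus ! i < \<nu>)"
      have i: "i < k" "mus ! i < \<nu>" using LeastI_ex[OF True] unfolding i_def by auto
      have least: "\<forall>i'<i. \<not> mus ! i' < \<nu>"
      proof (intro allI impI)
        fix i' assume "i' < i"
        then have "\<not> (i' < k \<and> mus ! i' < \<nu>)" unfolding i_def by (rule not_less_Least)
        then show "\<not> mus ! i' < \<nu>" using \<open>i' < i\<close> i by auto
      qed
      have "i \<le> length (filter (\<lambda>x. \<nu> \<le> x) mus)"
        using i least by (intro filter_len_ge) (auto simp: k_def not_less)
      then have "i < length (filter (\<lambda>x. \<nu> \<le> x) (mus @ nus))" using fn by simp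
      moreover have "i < length (mus @ nus)" using i by (simp add: k_def)
      ultimately have "\<nu> \<le> L ! i" using rev_sort_ge by (simp add: L_def)
      moreover have "L ! i \<le> mus ! i" using hyp i by (simp add: L_def k_def)
      ultimately show False using i by simp
    qed
  qed
  have "k < length (filter (\<lambda>x. L ! k \<le> x) (mus @ nus))"
    using rev_sort_ge[OF kl, of "L ! k"] by (simp add: L_def)
  moreover have "length (filter (\<lambda>x. L ! k \<le> x) mus) \<le> k" by (simp add: k_def)
  ultimately have "filter (\<lambda>x. L ! k \<le> x) nus \<noteq> []" by auto
  then obtain \<nu> where "\<nu> \<in> set nus" "L ! k \<le> \<nu>" by (auto simp: filter_empty_conv)
  with a show "rev (sort (mus @ nus)) ! length mus \<in> set nus"
    by (metis L_def k_def order_antisym)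
qed



lemma quad_norm: "Re (cinner ((adjoint_mat A ** A) *v x) x) = (norm (A *v x))^2"
  by (simp add: AA_quad Re_cinner_self)

lemma sv_facts:
  fixes A :: "complex^'n^'n"
  shows "length (sv_eigs A) = CARD('n)" and "\<And>i. i < CARD('n) \<Longrightarrow> 0 \<le> sv_eigs A ! i"
proof -
  let ?H = "adjoint_mat A ** A"
  have "\<exists>C es. orthonormal ([] @ C) \<and> eigl ?H ([] @ C) ([] @ es) \<and> length ([] @ C) = CARD('n)"
    by (rule full_ext[OF herm_AA]) (auto simp: orthonormal_def eigl_def)
  then obtain C es where B: "orthonormal ([] @ C)" "eigl ?H ([] @ C) ([] @ es)" "length ([] @ C) = CARD('n)"
    by blast
  have len: "length es = CARD('n)" using B by (simp add: eigl_def)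
  have sv: "sv_eigs A = rev (sort es)"
    using B charpoly_eig[of C ?H es] len by (intro sv_eigs_eq) auto
  have nn: "0 \<le> e" if "e \<in> set es" for e
  proof -
    obtain j where j: "j < length es" "e = es ! j" using \<open>e \<in> set es\<close> by (auto simp: in_set_conv_nth)
    have "?H *v (C!j) = of_real e *s C!j" using B j by (simp add: eigl_def)
    then have "(norm (A *v (C!j)))^2 = Re (cinner (of_real e *s C!j) (C!j))"
      by (metis quad_norm)
    also have "\<dots> = e" using B j len by (simp add: cinner_scale_left orthonormal_def)
    finally have "(norm (A *v (C!j)))^2 = e" .
    then show ?thesis by (metis zero_le_power2)
  qed
  show "length (sv_eigs A) = CARD('n)" using sv len by simp
  show "0 \<le> sv_eigs A ! i" if "i < CARD('n)" for i
  proof -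
    have "sv_eigs A ! i \<in> set (sv_eigs A)" using that sv len by (intro nth_mem) simp
    also have "set (sv_eigs A) = set es" by (simp add: sv)
    finally show ?thesis by (rule nn)
  qed
qed

lemma key:
  fixes A :: "complex^'n^'n"
  assumes on: "orthonormal V" and e: "eigl (adjoint_mat A ** A) V mus"
    and len: "length V < CARD('n)" and hyp: "\<forall>i<length V. sv_eigs A ! i \<le> mus ! i"
  shows "\<forall>y. (\<forall>v\<in>set V. cinner y v = 0) \<longrightarrow> (norm (A *v y))^2 \<le> sv_eigs A ! length V * (norm y)^2"
    and "\<exists>x. norm x = 1 \<and> (\<forall>v\<in>set V. cinner x v = 0) \<and> (norm (A *v x))^2 = sv_eigs A ! length V"
proof -
  let ?H = "adjoint_mat A ** A"
  obtain x \<nu> where x: "norm x = 1" "\<forall>v\<in>set V. cinner x v = 0" "?H *v x = of_real \<nu> *s x"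
    and bound: "\<forall>y. (\<forall>v\<in>set V. cinner y v = 0) \<longrightarrow> Re (cinner (?H *v y) y) \<le> \<nu> * (norm y)^2"
    using ext_eig[OF herm_AA on e len] by blast
  have on1: "orthonormal (V @ [x])" by (rule orthonormal_snoc[OF on x(1,2)])
  have e1: "eigl ?H (V @ [x]) (mus @ [\<nu>])" by (rule eigl_snoc[OF e x(3)])
  obtain C es where B: "orthonormal ((V @ [x]) @ C)" "eigl ?H ((V @ [x]) @ C) ((mus @ [\<nu>]) @ es)"
      "length ((V @ [x]) @ C) = CARD('n)"
    using full_ext[OF herm_AA on1 e1] len by auto
  define nus where "nus = \<nu> # es"
  define W where "W = x # C"
  have BW: "(V @ [x]) @ C = V @ W" and dn: "(mus @ [\<nu>]) @ es = mus @ nus" by (auto simp: W_def nus_def)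
  have lm: "length mus = length V" using e by (simp add: eigl_def)
  have lW: "length nus = length W" using B(2) lm by (simp add: eigl_def nus_def W_def)
  have B1: "orthonormal (V @ W)" using B(1) by (simp add: W_def)
  have B2: "eigl ?H (V @ W) (mus @ nus)" using B(2) by (simp add: W_def nus_def)
  have B3: "length (V @ W) = CARD('n)" using B(3) by (simp add: W_def)
  have sv: "sv_eigs A = rev (sort (mus @ nus))"
    using sv_eigs_eq[OF charpoly_eig[OF B1 B2 B3]] B3 lW lm by simp
  have hyp': "\<forall>i<length mus. rev (sort (mus @ nus)) ! i \<le> mus ! i" using hyp lm sv by simp
  have c1: "\<forall>\<nu>'\<in>set nus. \<nu>' \<le> sv_eigs A ! length V"
    using comb(1)[OF _ hyp'] sv lm by (simp add: nus_def)
  have c2: "sv_eigs A ! length V \<in> set nus"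
    using comb(2)[OF _ hyp'] sv lm by (simp add: nus_def)
  show "\<forall>y. (\<forall>v\<in>set V. cinner y v = 0) \<longrightarrow> (norm (A *v y))^2 \<le> sv_eigs A ! length V * (norm y)^2"
  proof (intro allI impI)
    fix y assume y: "\<forall>v\<in>set V. cinner y v = 0"
    have "(norm (A *v y))^2 \<le> \<nu> * (norm y)^2" using bound y by (simp add: quad_norm)
    also have "\<dots> \<le> sv_eigs A ! length V * (norm y)^2"
      using c1 by (intro mult_right_mono) (auto simp: nus_def)
    finally show "(norm (A *v y))^2 \<le> sv_eigs A ! length V * (norm y)^2" .
  qed
  obtain j where j: "j < length nus" "nus ! j = sv_eigs A ! length V"
    using c2 by (auto simp: in_set_conv_nth)
  define b where "b = W ! j"
  have bB: "b = (V @ W) ! (length V + j)" by (simp add: b_def)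
  have lt: "length V + j < length (V @ W)" using j lW by simp
  have onVW: "orthonormal (V @ W)" using B(1) BW by simp
  have "\<forall>i<length (V@W). \<forall>j<length (V@W). cinner ((V@W)!i) ((V@W)!j) = (if i = j then 1 else 0)"
    using onVW by (simp only: orthonormal_def)
  then have "cinner ((V@W)!(length V + j)) ((V@W)!(length V + j)) =
     (if length V + j = length V + j then 1 else 0)" using lt by blast
  then have bb: "cinner b b = 1" unfolding bB by simp
  have bo: "\<forall>v\<in>set V. cinner b v = 0"
  proof
    fix v assume "v \<in> set V"
    then obtain i where i: "i < length V" "v = V ! i" by (auto simp: in_set_conv_nth)
    then have "v = (V @ W) ! i" by (simp add: nth_append)
    have "\<forall>i<length (V@W). \<forall>j<length (V@W). cinner ((V@W)!i) ((V@W)!j) = (if i = j then 1 else 0)"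
      using onVW by (simp only: orthonormal_def)
    moreover have ilt: "i < length (V@W)" using i by simp
    ultimately have "cinner ((V@W)!(length V + j)) ((V@W)!i) = (if length V + j = i then 1 else 0)"
      using lt by blast
    then show "cinner b v = 0" using i \<open>v = (V @ W) ! i\<close> unfolding bB by simp
  qed
  have "\<forall>i<length (V@W). ?H *v (V@W)!i = of_real ((mus@nus)!i) *s (V@W)!i"
    using B2 unfolding eigl_def by (elim conjE)
  then have "?H *v (V@W)!(length V+j) = of_real ((mus@nus)!(length V + j)) *s (V@W)!(length V + j)"
    using lt by blast
  then have "?H *v b = of_real ((mus @ nus) ! (length V + j)) *s b" unfolding bB .
  then have Hb: "?H *v b = of_real (sv_eigs A ! length V) *s b"
    using j lm by (simp add: nth_append)
  have "(norm (A *v b))^2 = Re (cinner (?H *v b) b)" by (simp add: quad_norm)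
  also have "\<dots> = sv_eigs A ! length V" by (simp add: Hb cinner_scale_left bb)
  finally have "(norm (A *v b))^2 = sv_eigs A ! length V" .
  moreover have "norm b = 1"
  proof -
    have n2: "(norm b)^2 = 1" using bb by (simp only: cinner_self of_real_eq_1_iff)
    have "norm b = sqrt ((norm b)^2)" by simp
    then show ?thesis using n2 by simp
  qed
  ultimately show "\<exists>x. norm x = 1 \<and> (\<forall>v\<in>set V. cinner x v = 0) \<and> (norm (A *v x))^2 = sv_eigs A ! length V"
    using bo by blast
qed

lemma const_from_basis:
  fixes M1 M2 :: "complex^'n^'n"
  assumes on: "orthonormal B" and len: "length B = CARD('n)"
    and eq: "\<forall>i<CARD('n). M1 *v (B!i) = M2 *v (B!i)"
  shows "M1 = M2"
proof -
  obtain idx :: "'n \<Rightarrow> nat" where bij: "bij_betw idx UNIV {0..<CARD('n)}"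
    using ex_bij_betw_finite_nat[of "UNIV::'n set"] by auto
  have idx_lt: "idx j < CARD('n)" for j using bij by (auto simp: bij_betw_def)
  have idx_inj: "idx j = idx j' \<longleftrightarrow> j = j'" for j j' using bij by (auto simp: bij_betw_def inj_on_def)
  define U :: "complex^'n^'n" where "U = (\<chi> i j. (B ! idx j) $ i)"
  have UU: "adjoint_mat U ** U = mat 1"
  proof -
    have "(adjoint_mat U ** U) $ j $ j' = cinner (B ! idx j') (B ! idx j)" for j j'
      by (simp add: adjoint_mat_def U_def matrix_matrix_mult_def cinner_def mult.commute)
    also have "cinner (B ! idx j') (B ! idx j) = (if j = j' then 1 else 0)" for j j'
      using on len idx_lt idx_inj unfolding orthonormal_def by auto
    finally show ?thesis by (simp add: vec_eq_iff mat_def)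
  qed
  then have UU': "U ** adjoint_mat U = mat 1" by (simp add: matrix_left_right_inverse)
  have col: "(M ** U) $ i $ j = (M *v (B ! idx j)) $ i" for M :: "complex^'n^'n" and i j
    by (simp add: U_def matrix_matrix_mult_def matrix_vector_mult_def)
  have "M1 ** U = M2 ** U" using eq idx_lt by (simp add: vec_eq_iff col)
  then show ?thesis by (metis UU' matrix_mul_assoc matrix_mul_rid)
qed



theorem theorem5:
  fixes \<Omega> :: "complex set" and F :: "complex \<Rightarrow> complex^'n^'n"
  assumes "open \<Omega>" and "connected \<Omega>" and "\<Omega> \<noteq> {}"
    and "\<And>i j. (\<lambda>z. F z $ i $ j) analytic_on \<Omega>"
    and "\<And>k. k \<in> {1..CARD('n)} \<Longrightarrow>
           \<exists>zk\<in>\<Omega>. \<forall>z\<in>\<Omega>. sing_val k (F z) \<le> sing_val k (F zk)"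
  shows "\<exists>C. \<forall>z\<in>\<Omega>. F z = C"
proof -
  note opn = assms(1) and conn = assms(2) and ana = assms(4) and mx = assms(5)
  obtain z0 where z0: "z0 \<in> \<Omega>" using assms(3) by blast
  define zs where "zs k = (SOME zk. zk \<in> \<Omega> \<and> (\<forall>z\<in>\<Omega>. sing_val k (F z) \<le> sing_val k (F zk)))" for k
  have zs: "zs k \<in> \<Omega> \<and> (\<forall>z\<in>\<Omega>. sing_val k (F z) \<le> sing_val k (F (zs k)))"
    if "k \<in> {1..CARD('n)}" for k
  proof -
    have "\<exists>zk. zk \<in> \<Omega> \<and> (\<forall>z\<in>\<Omega>. sing_val k (F z) \<le> sing_val k (F zk))"
      using mx[OF that] by blast
    then show ?thesis unfolding zs_def by (rule someI_ex)
  qed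
  define lam where "lam i = sv_eigs (F (zs (Suc i))) ! i" for i
  have le_lam: "sv_eigs (F z) ! i \<le> lam i" if "i < CARD('n)" "z \<in> \<Omega>" for i z
  proof -
    have "sing_val (Suc i) (F z) \<le> sing_val (Suc i) (F (zs (Suc i)))"
      using zs[of "Suc i"] that by auto
    then show ?thesis by (simp add: sing_val_def lam_def)
  qed
  have hol: "(\<lambda>z. F z $ i $ j) holomorphic_on \<Omega>" for i j
    using ana analytic_imp_holomorphic by blast
  define H where "H z = adjoint_mat (F z) ** F z" for z
  define P where "P k \<longleftrightarrow> (\<exists>V. length V = k \<and> orthonormal V \<and> (\<forall>z\<in>\<Omega>. eigl (H z) V (map lam [0..<k])) \<and>
      (\<forall>i<k. \<forall>z\<in>\<Omega>. F z *v (V!i) = F z0 *v (V!i)))" for k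
  have "P k" if "k \<le> CARD('n)" for k
    using that
  proof (induction k)
    case 0
    then show ?case unfolding P_def by (intro exI[of _ "[]"]) (auto simp: orthonormal_def eigl_def)
  next
    case (Suc k)
    then have kn: "k < CARD('n)" by simp
    obtain V where V: "length V = k" "orthonormal V" "\<forall>z\<in>\<Omega>. eigl (H z) V (map lam [0..<k])"
      "\<forall>i<k. \<forall>z\<in>\<Omega>. F z *v (V!i) = F z0 *v (V!i)"
      using Suc by (auto simp: P_def)
    define z' where "z' = zs (Suc k)"
    have z': "z' \<in> \<Omega>" using zs[of "Suc k"] kn by (auto simp: z'_def)
    define m where "m = lam k"
    have hyp: "\<forall>i<length V. sv_eigs (F z) ! i \<le> map lam [0..<k] ! i" if "z \<in> \<Omega>" for z
      using le_lam that V(1) kn by auto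
    have ka: "(norm (F z *v y))^2 \<le> m * (norm y)^2"
      if z: "z \<in> \<Omega>" and y: "\<forall>v\<in>set V. cinner y v = 0" for z y
    proof -
      have "(norm (F z *v y))^2 \<le> sv_eigs (F z) ! length V * (norm y)^2"
        using key(1)[OF V(2) V(3)[rule_format, OF z, unfolded H_def] _ hyp[OF z]] V(1) kn y by auto
      also have "\<dots> \<le> m * (norm y)^2"
        using le_lam[OF kn z] V(1) by (intro mult_right_mono) (auto simp: m_def)
      finally show ?thesis .
    qed
    obtain x where x: "norm x = 1" "\<forall>v\<in>set V. cinner x v = 0" "(norm (F z' *v x))^2 = m"
      using key(2)[OF V(2) V(3)[rule_format, OF z', unfolded H_def] _ hyp[OF z']] V(1) kn
      by (auto simp: m_def lam_def z'_def)
    have m0: "0 \<le> m" using x(3) by (metis zero_le_power2)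
    define c where "c = F z' *v x"
    have nc: "norm c = sqrt m" using x(3) by (simp add: c_def real_sqrt_unique)
    define f where "f z = cinner (F z *v x) c" for z
    have fhol: "f holomorphic_on \<Omega>"
      unfolding f_def cinner_def matrix_vector_mult_def vec_lambda_beta
      by (intro holomorphic_intros hol)
    have Fx: "norm (F z *v x) \<le> sqrt m" if "z \<in> \<Omega>" for z
      using ka[OF that x(2)] x(1) by (intro real_le_rsqrt) simp
    have fz': "f z' = of_real m" using x(3) by (simp add: f_def c_def cinner_self)
    have fle: "norm (f z) \<le> norm (f z')" if "z \<in> \<Omega>" for z
    proof -
      have "norm (f z) \<le> norm (F z *v x) * norm c" unfolding f_def by (rule cinner_cs)
      also have "\<dots> \<le> sqrt m * sqrt m" unfolding nc using Fx[OF that] m0 by (intro mult_right_mono) auto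
      also have "\<dots> = norm (f z')" using m0 by (simp add: fz')
      finally show ?thesis .
    qed
    have "f constant_on \<Omega>"
      by (rule maximum_modulus_principle[OF fhol opn conn opn order_refl z' fle])
    then have fc: "f z = of_real m" if "z \<in> \<Omega>" for z
      using that z' fz' unfolding constant_on_def by metis
    have Fxc: "F z *v x = c" if z: "z \<in> \<Omega>" for z
    proof -
      have "(norm (F z *v x - c))^2 = (norm (F z *v x))^2 - 2 * Re (f z) + (norm c)^2"
        unfolding f_def by (rule norm_diff_sq)
      also have "\<dots> \<le> 0" using ka[OF z x(2)] x(1) fc[OF z] nc m0 by simp
      finally show ?thesis by simp
    qed
    have Hx: "H z *v x = of_real m *s x" if z: "z \<in> \<Omega>" for z
    proof -
      define h where "h = H z *v x"
      have ho: "\<forall>v\<in>set V. cinner h v = 0"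
        unfolding h_def H_def
        by (rule eig_orth[OF herm_AA V(3)[rule_format, OF z, unfolded H_def] x(2)])
      have Fh: "norm (F z *v h) \<le> sqrt m * norm h"
      proof -
        have "norm (F z *v h) \<le> sqrt (m * (norm h)^2)" using ka[OF z ho] by (intro real_le_rsqrt)
        also have "\<dots> = sqrt m * norm h" by (simp add: real_sqrt_mult)
        finally show ?thesis .
      qed
      have "cinner h h = cinner (F z *v x) (F z *v h)"
        using AA_quad[of "F z" x h] by (simp only: H_def[symmetric] h_def[symmetric])
      then have "(norm h)^2 = Re (cinner (F z *v x) (F z *v h))"
        by (simp add: Re_cinner_self[symmetric])
      also have "\<dots> \<le> norm (F z *v x) * norm (F z *v h)"
        by (metis cinner_cs complex_Re_le_cmod order_trans)
      also have "\<dots> \<le> sqrt m * (sqrt m * norm h)"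
        using Fx[OF z] Fh m0 by (intro mult_mono) auto
      also have "\<dots> = m * norm h" using m0 by simp
      finally have "(norm h)^2 \<le> m * norm h" .
      then have hm: "norm h \<le> m" using m0 by (cases "h = 0") (simp_all add: power2_eq_square mult_le_cancel_right)
      have Rhx: "Re (cinner h x) = m"
        unfolding h_def H_def using quad_norm[of "F z" x] Fxc[OF z] nc m0 by simp
      have "(norm (h - of_real m *s x))^2 = (norm h)^2 - 2 * Re (cinner h (of_real m *s x)) + (norm (of_real m *s x))^2"
        by (rule norm_diff_sq)
      also have "\<dots> = (norm h)^2 - m^2"
        using Rhx x(1) m0 by (simp add: cinner_scale_right norm_scale_vec power2_eq_square)
      also have "\<dots> \<le> 0"
      proof -
        have "(norm h)^2 \<le> m^2" by (rule power_mono[OF hm norm_ge_zero])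
        then show ?thesis by simp
      qed
      finally show ?thesis unfolding h_def by simp
    qed
    have "length (V @ [x]) = Suc k" using V(1) by simp
    moreover have "orthonormal (V @ [x])" by (rule orthonormal_snoc[OF V(2) x(1,2)])
    moreover have "\<forall>z\<in>\<Omega>. eigl (H z) (V @ [x]) (map lam [0..<Suc k])"
    proof
      fix z assume z: "z \<in> \<Omega>"
      have "eigl (H z) (V @ [x]) (map lam [0..<k] @ [m])"
        by (rule eigl_snoc[OF V(3)[rule_format, OF z] Hx[OF z]])
      then show "eigl (H z) (V @ [x]) (map lam [0..<Suc k])" by (simp add: m_def)
    qed
    moreover have "\<forall>i<Suc k. \<forall>z\<in>\<Omega>. F z *v ((V @ [x])!i) = F z0 *v ((V @ [x])!i)"
    proof (intro allI impI ballI)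
      fix i z assume i: "i < Suc k" and z: "z \<in> \<Omega>"
      show "F z *v ((V @ [x])!i) = F z0 *v ((V @ [x])!i)"
      proof (cases "i < k")
        case True
        then show ?thesis using V(1,4) z by (simp add: nth_append)
      next
        case False
        then have "i = k" using i by simp
        then show ?thesis using V(1) Fxc[OF z] Fxc[OF z0] by (simp add: nth_append)
      qed
    qed
    ultimately show ?case unfolding P_def by blast
  qed
  then obtain V where V: "length V = CARD('n)" "orthonormal V"
      "\<forall>i<CARD('n). \<forall>z\<in>\<Omega>. F z *v (V!i) = F z0 *v (V!i)"
    unfolding P_def by blast
  have "\<forall>z\<in>\<Omega>. F z = F z0"
    using const_from_basis[OF V(2) V(1)] V(3) by blast
  then show ?thesis by blast
qed

end
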